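(* For $\sigma>0$ and $\mu\in\mathbb{R}$ with $|\mu|\ge r(\sigma)$, we have $q_\sigma(\mu)\ge\frac14\sigma\,\ell_{exp}(\mu)>0$.
   Context: $\ell_{exp}(t)=\exp(-|t|)$. For $\sigma\ge0$, $g_\sigma(\mu)=\mathbb{E}_{Z\sim\mathcal{N}(0,1)}[\ell_{exp}(\mu+\sigma Z)]$ and $q_\sigma(\mu)=\frac{\partial}{\partial\sigma}g_\sigma(\mu)$. The function $r(\sigma)=\sigma^2+\sigma\sqrt{2\log\frac{4\sqrt2}{\sqrt\pi\sigma}}$ for $0<\sigma\le\frac{4\sqrt2}{\sqrt\pi}$ and $r(\sigma)=2\sigma^2$ for $\sigma>\frac{4\sqrt2}{\sqrt\pi}$. *)

theory Defs
  imports "HOL-Probability.Probability"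
begin

definition l_exp :: "real \<Rightarrow> real" where
  "l_exp t = exp (- \<bar>t\<bar>)"

definition g :: "real \<Rightarrow> real \<Rightarrow> real" where
  "g \<sigma> \<mu> = (\<integral>z. std_normal_density z * l_exp (\<mu> + \<sigma> * z) \<partial>lborel)"

definition q :: "real \<Rightarrow> real \<Rightarrow> real" where
  "q \<sigma> \<mu> = deriv (\<lambda>s. g s \<mu>) \<sigma>"

definition r :: "real \<Rightarrow> real" where
  "r \<sigma> = (if \<sigma> \<le> 4 * sqrt 2 / sqrt pi
            then \<sigma>\<^sup>2 + \<sigma> * sqrt (2 * ln (4 * sqrt 2 / (sqrt pi * \<sigma>)))
            else 2 * \<sigma>\<^sup>2)"

end

theory Submission
  imports Defs
begin

definition Psi :: "real \<Rightarrow> real" where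
  "Psi t = (\<integral>x. indicator {t<..} x * std_normal_density x \<partial>lborel)"

lemma phi_even: "std_normal_density (-x) = std_normal_density x"
  by (simp add: std_normal_density_def)

lemma int_ind: "integrable lborel (\<lambda>x. indicator A x * std_normal_density x)" if "A \<in> sets borel" for A
  using integrable_mult_indicator[of A lborel "std_normal_density"] that by simp

lemma Psi_LBINT: "Psi t = (LBINT x=ereal t..\<infinity>. std_normal_density x)"
  by (simp add: Psi_def interval_integral_Ioi set_lebesgue_integral_def)

lemma Psi_nonneg: "Psi t \<ge> 0"
  unfolding Psi_def by (intro integral_nonneg_AE) (auto simp: indicator_def)

lemma Psi_mono: "t \<le> u \<Longrightarrow> Psi u \<le> Psi t"
  unfolding Psi_def by (intro integral_mono int_ind) (auto simp: indicator_def)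

lemma Psi_0: "Psi 0 = 1/2"
proof -
  have e: "Psi 0 = (\<integral>x. indicator {..<0} x * std_normal_density x \<partial>lborel)"
    unfolding Psi_def
    by (subst lborel_integral_real_affine[where c="-1" and t=0])
       (auto intro!: Bochner_Integration.integral_cong simp: phi_even split: split_indicator)
  have "1 = (\<integral>x. std_normal_density x \<partial>lborel)" by simp
  also have "\<dots> = (\<integral>x. indicator {0<..} x * std_normal_density x + indicator {..<0} x * std_normal_density x \<partial>lborel)"
    by (rule integral_cong_AE) (auto intro!: eventually_mono[OF AE_lborel_singleton[of 0]] split: split_indicator)
  also have "\<dots> = Psi 0 + Psi 0"
    by (subst Bochner_Integration.integral_add) (auto intro!: int_ind simp: e[symmetric] Psi_def)
  finally show ?thesis by simp
qed

lemma Psi_deriv: "(Psi has_real_derivative (- std_normal_density t)) (at t)"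
proof -
  have cont: "continuous_on UNIV std_normal_density"
    unfolding std_normal_density_def by (intro continuous_intros) auto
  have eq: "Psi u = Psi 0 - (LBINT y=ereal 0..u. std_normal_density y)" for u
  proof -
    have "(LBINT x=ereal 0..ereal u. std_normal_density x) + (LBINT x=ereal u..\<infinity>. std_normal_density x) = (LBINT x=ereal 0..\<infinity>. std_normal_density x)"
      by (rule interval_integral_sum) 
         (auto simp: interval_lebesgue_integrable_def set_integrable_def intro!: int_ind)
    then show ?thesis by (simp add: Psi_LBINT zero_ereal_def)
  qed
  define a where "a = min 0 t - 1"
  define b where "b = max 0 t + 1"
  have "((\<lambda>u. LBINT y=ereal 0..u. std_normal_density y) has_vector_derivative (std_normal_density t)) (at t within {a..b})"
    by (rule interval_integral_FTC2) (auto simp: a_def b_def intro: continuous_on_subset[OF cont])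
  moreover have "at t within {a..b} = at t" by (rule at_within_Icc_at) (auto simp: a_def b_def)
  ultimately have "((\<lambda>u. LBINT y=ereal 0..u. std_normal_density y) has_real_derivative (std_normal_density t)) (at t)"
    by (simp add: has_real_derivative_iff_has_vector_derivative)
  then have "((\<lambda>u. Psi 0 - (LBINT y=ereal 0..u. std_normal_density y)) has_real_derivative (- std_normal_density t)) (at t)"
    by (auto intro!: derivative_eq_intros)
  moreover have "Psi = (\<lambda>u. Psi 0 - (LBINT y=ereal 0..u. std_normal_density y))"
    using eq by blast
  ultimately show ?thesis by metis
qed
lemma L1: "std_normal_density z * exp (-(m + s*z)) = exp (s\<^sup>2/2 - m) * std_normal_density (s + z)"
proof -
  have "-z\<^sup>2/2 + -(m + s*z) = (s\<^sup>2/2 - m) + -(s+z)\<^sup>2/2" by (simp add: power2_eq_square field_simps)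
  then have "exp (-z\<^sup>2/2) * exp (-(m + s*z)) = exp (s\<^sup>2/2 - m) * exp (-(s+z)\<^sup>2/2)"
    by (metis exp_add)
  then show ?thesis unfolding std_normal_density_def by (metis mult.assoc mult.left_commute)
qed

lemma L2: "std_normal_density z * exp (m + s*z) = exp (s\<^sup>2/2 + m) * std_normal_density (s - z)"
proof -
  have "-z\<^sup>2/2 + (m + s*z) = (s\<^sup>2/2 + m) + -(s-z)\<^sup>2/2" by (simp add: power2_eq_square field_simps)
  then have "exp (-z\<^sup>2/2) * exp (m + s*z) = exp (s\<^sup>2/2 + m) * exp (-(s-z)\<^sup>2/2)"
    by (metis exp_add)
  then show ?thesis unfolding std_normal_density_def by (metis mult.assoc mult.left_commute)
qed

lemma P1: "s > 0 \<Longrightarrow> (\<integral>z. indicator {-m/s<..} z * std_normal_density (s + z) \<partial>lborel) = Psi (s - m/s)"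
  unfolding Psi_def
  by (subst lborel_integral_real_affine[where c=1 and t=s])
     (auto intro!: Bochner_Integration.integral_cong split: split_indicator)

lemma P2: "s > 0 \<Longrightarrow> (\<integral>z. indicator {..< -m/s} z * std_normal_density (s - z) \<partial>lborel) = Psi (s + m/s)"
  unfolding Psi_def
  by (subst lborel_integral_real_affine[where c="-1" and t=s])
     (auto intro!: Bochner_Integration.integral_cong split: split_indicator)

lemma I1: "integrable lborel (\<lambda>z. indicator {-m/s<..} z * std_normal_density (s + z))" if "s > 0"
proof -
  have "integrable lborel (\<lambda>z. (\<lambda>v. indicator {s-m/s<..} v * std_normal_density v) (s + 1 * z))"
    by (subst lborel_integrable_real_affine_iff) (auto intro!: int_ind)
  moreover have "(\<lambda>z. (\<lambda>v. indicator {s-m/s<..} v * std_normal_density v) (s + 1 * z)) = (\<lambda>z. indicator {-m/s<..} z * std_normal_density (s + z))"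
    by (auto simp: fun_eq_iff split: split_indicator)
  ultimately show ?thesis by simp
qed

lemma I2: "integrable lborel (\<lambda>z. indicator {..< -m/s} z * std_normal_density (s - z))" if "s > 0"
proof -
  have "integrable lborel (\<lambda>z. (\<lambda>v. indicator {s+m/s<..} v * std_normal_density v) (s + (-1) * z))"
    by (subst lborel_integrable_real_affine_iff) (auto intro!: int_ind)
  moreover have "(\<lambda>z. (\<lambda>v. indicator {s+m/s<..} v * std_normal_density v) (s + (-1) * z)) = (\<lambda>z. indicator {..< -m/s} z * std_normal_density (s - z))"
    by (auto simp: fun_eq_iff split: split_indicator)
  ultimately show ?thesis by simp
qed

lemma g_closed: assumes "s > 0"
  shows "g s m = exp (s\<^sup>2/2 - m) * Psi (s - m/s) + exp (s\<^sup>2/2 + m) * Psi (s + m/s)"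
proof -
  have "g s m = (\<integral>z. exp (s\<^sup>2/2 - m) * (indicator {-m/s<..} z * std_normal_density (s + z))
     + exp (s\<^sup>2/2 + m) * (indicator {..< -m/s} z * std_normal_density (s - z)) \<partial>lborel)"
    unfolding g_def
  proof (rule integral_cong_AE)
    show "AE z in lborel. std_normal_density z * l_exp (m + s * z) = exp (s\<^sup>2/2 - m) * (indicator {-m/s<..} z * std_normal_density (s + z))
     + exp (s\<^sup>2/2 + m) * (indicator {..< -m/s} z * std_normal_density (s - z))"
    proof (rule eventually_mono[OF AE_lborel_singleton[of "-m/s"]])
      fix z :: real assume z: "z \<noteq> -m/s"
      show "std_normal_density z * l_exp (m + s * z) = exp (s\<^sup>2/2 - m) * (indicator {-m/s<..} z * std_normal_density (s + z))
     + exp (s\<^sup>2/2 + m) * (indicator {..< -m/s} z * std_normal_density (s - z))"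
      proof (cases "z > -m/s")
        case True
        then have "m + s*z > 0" using assms by (simp add: field_simps)
        then show ?thesis using True L1[of z m s] by (simp add: l_exp_def)
      next
        case False
        then have "z < -m/s" using z by simp
        then have "m + s*z < 0" using assms by (simp add: field_simps)
        then have "l_exp (m+s*z) = exp (m + s*z)" by (simp add: l_exp_def)
        then show ?thesis using \<open>z < -m/s\<close> L2[of z m s] by simp
      qed
    qed
  qed (auto simp: l_exp_def)
  also have "\<dots> = exp (s\<^sup>2/2 - m) * Psi (s - m/s) + exp (s\<^sup>2/2 + m) * Psi (s + m/s)"
    using assms I1[OF assms, of m] I2[OF assms, of m] P1[OF assms, of m] P2[OF assms, of m]
    by (subst Bochner_Integration.integral_add) (auto intro!: integrable_mult_right)
  finally show ?thesis .
qed
lemma Psi_chain[derivative_intros]: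
  "(f has_real_derivative f') (at x within S) \<Longrightarrow>
   ((\<lambda>x. Psi (f x)) has_real_derivative (- std_normal_density (f x)) * f') (at x within S)"
  using DERIV_chain2[OF Psi_deriv] by blast

lemma expphi1: "s > 0 \<Longrightarrow> exp (s\<^sup>2/2 - m) * std_normal_density (s - m/s) = exp (-(m\<^sup>2/(2* s^2))) / sqrt (2*pi)"
proof -
  assume s: "s > 0"
  have "s\<^sup>2/2 - m + (- (s - m/s)\<^sup>2/2) = -(m\<^sup>2/(2* s^2))" using s
    by (simp add: power2_eq_square field_simps)
  then have "exp (s\<^sup>2/2 - m) * exp (- (s - m/s)\<^sup>2/2) = exp (-(m\<^sup>2/(2* s^2)))" by (metis exp_add)
  then show ?thesis unfolding std_normal_density_def by (simp add: field_simps)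
qed

lemma expphi2: "s > 0 \<Longrightarrow> exp (s\<^sup>2/2 + m) * std_normal_density (s + m/s) = exp (-(m\<^sup>2/(2* s^2))) / sqrt (2*pi)"
proof -
  assume s: "s > 0"
  have "s\<^sup>2/2 + m + (- (s + m/s)\<^sup>2/2) = -(m\<^sup>2/(2* s^2))" using s
    by (simp add: power2_eq_square field_simps)
  then have "exp (s\<^sup>2/2 + m) * exp (- (s + m/s)\<^sup>2/2) = exp (-(m\<^sup>2/(2* s^2)))" by (metis exp_add)
  then show ?thesis unfolding std_normal_density_def by (simp add: field_simps)
qed

lemma q_closed: assumes s: "s > 0"
  shows "q s m = s * g s m - 2 * (exp (-(m\<^sup>2/(2 * s^2))) / sqrt (2 * pi))"
proof -
  define G where "G = (\<lambda>s. exp (s\<^sup>2/2 - m) * Psi (s - m/s) + exp (s\<^sup>2/2 + m) * Psi (s + m/s))"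
  define p where "p = exp (-(m\<^sup>2/(2 * s^2))) / sqrt (2 * pi)"
  define A where "A = exp (s\<^sup>2/2 - m)"
  define B where "B = exp (s\<^sup>2/2 + m)"
  have dA: "((\<lambda>t. exp (t\<^sup>2/2 - m)) has_real_derivative A * s) (at s)"
    unfolding A_def by (auto intro!: derivative_eq_intros)
  have dB: "((\<lambda>t. exp (t\<^sup>2/2 + m)) has_real_derivative B * s) (at s)"
    unfolding B_def by (auto intro!: derivative_eq_intros)
  have di: "((\<lambda>t. m * inverse t) has_real_derivative m * (- (inverse s ^ Suc (Suc 0)))) (at s)"
    using s by (intro DERIV_cmult DERIV_inverse) simp
  have e1: "(\<lambda>t. m * inverse t) = (\<lambda>t. m / t)" by (simp add: divide_inverse)
  have e2: "m * (- (inverse s ^ Suc (Suc 0))) = - (m / s\<^sup>2)" by (simp add: power2_eq_square divide_inverse)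
  have dm: "((\<lambda>t. m / t) has_real_derivative - (m / s\<^sup>2)) (at s)" using di unfolding e1 e2 .
  have da: "((\<lambda>t. t - m/t) has_real_derivative 1 + m/s\<^sup>2) (at s)"
    using DERIV_diff[OF DERIV_ident dm] by simp
  have db: "((\<lambda>t. t + m/t) has_real_derivative 1 - m/s\<^sup>2) (at s)"
    using DERIV_add[OF DERIV_ident dm] by simp
  have D0: "(G has_real_derivative
      (A * s * Psi (s - m/s) + A * (- std_normal_density (s - m/s) * (1 + m/s\<^sup>2)))
     + (B * s * Psi (s + m/s) + B * (- std_normal_density (s + m/s) * (1 - m/s\<^sup>2)))) (at s)"
  proof -
    have 1: "((\<lambda>t. exp (t\<^sup>2/2 - m) * Psi (t - m/t)) has_real_derivative
      A * s * Psi (s - m/s) + A * (- std_normal_density (s - m/s) * (1 + m/s\<^sup>2))) (at s)"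
      using DERIV_mult'[OF dA Psi_chain[OF da]] unfolding A_def by (simp add: algebra_simps)
    have 2: "((\<lambda>t. exp (t\<^sup>2/2 + m) * Psi (t + m/t)) has_real_derivative
      B * s * Psi (s + m/s) + B * (- std_normal_density (s + m/s) * (1 - m/s\<^sup>2))) (at s)"
      using DERIV_mult'[OF dB Psi_chain[OF db]] unfolding B_def by (simp add: algebra_simps)
    show ?thesis unfolding G_def by (rule DERIV_add[OF 1 2])
  qed
  have "(A * s * Psi (s - m/s) + A * (- std_normal_density (s - m/s) * (1 + m/s\<^sup>2)))
     + (B * s * Psi (s + m/s) + B * (- std_normal_density (s + m/s) * (1 - m/s\<^sup>2)))
     = s * (A * Psi (s - m/s) + B * Psi (s + m/s)) - (A * std_normal_density (s - m/s)) * (1 + m/s\<^sup>2)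
        - (B * std_normal_density (s + m/s)) * (1 - m/s\<^sup>2)"
    by (simp add: algebra_simps)
  also have "\<dots> = s * G s - 2 * p"
  proof -
    have hA: "A * std_normal_density (s - m/s) = p" using expphi1[OF s, of m] unfolding A_def p_def .
    have hB: "B * std_normal_density (s + m/s) = p" using expphi2[OF s, of m] unfolding B_def p_def .
    show ?thesis unfolding hA hB by (simp add: G_def A_def B_def algebra_simps)
  qed
  finally have D: "(G has_real_derivative s * G s - 2 * p) (at s)" using D0 by simp
  have D2: "((\<lambda>t. g t m) has_real_derivative s * G s - 2 * p) (at s)"
    by (rule has_field_derivative_transform_within_open[OF D, of "{0<..}"])
       (use s in \<open>auto simp: G_def g_closed\<close>)
  show ?thesis unfolding q_def using DERIV_imp_deriv[OF D2] s by (simp add: G_def g_closed p_def)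
qed
lemma keyE:
  fixes s m :: real
  assumes s: "s > 0" and m: "m \<ge> r s"
  shows "s\<^sup>2 \<le> m" and "exp (-((m - s\<^sup>2)\<^sup>2/(2 * s^2))) \<le> s / (4 * sqrt 2 / sqrt pi)"
proof -
  define c where "c = 4 * sqrt 2 / sqrt pi"
  have c: "c > 0" unfolding c_def by simp
  show "s\<^sup>2 \<le> m"
  proof (cases "s \<le> 4 * sqrt 2 / sqrt pi")
    case True
    then have "4 * sqrt 2 / (sqrt pi * s) \<ge> 1" using s by (simp add: field_simps)
    then have "ln (4 * sqrt 2 / (sqrt pi * s)) \<ge> 0" by simp
    then have "s * sqrt (2 * ln (4 * sqrt 2 / (sqrt pi * s))) \<ge> 0" using s by simp
    then show ?thesis using m True unfolding r_def by simp
  next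
    case False
    have "2 * s\<^sup>2 \<le> m" using m False unfolding r_def by simp
    moreover have "s\<^sup>2 \<ge> 0" by simp
    ultimately show ?thesis by linarith
  qed
  then have ms: "m - s\<^sup>2 \<ge> 0" by simp
  have "exp (-((m - s\<^sup>2)\<^sup>2/(2 * s^2))) \<le> s / c"
  proof (cases "s \<le> c")
    case True
    define L where "L = ln (c / s)"
    have L0: "L \<ge> 0" unfolding L_def using True s by simp
    have "m - s\<^sup>2 \<ge> s * sqrt (2 * L)" using m True unfolding r_def L_def c_def by simp
    moreover have "s * sqrt (2 * L) \<ge> 0" using s L0 by simp
    ultimately have "(m - s\<^sup>2)\<^sup>2 \<ge> (s * sqrt (2 * L))\<^sup>2" by (intro power_mono) auto
    also have "(s * sqrt (2 * L))\<^sup>2 = s\<^sup>2 * (2 * L)" using L0 by (simp add: power_mult_distrib)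
    finally have "(m - s\<^sup>2)\<^sup>2/(2 * s^2) \<ge> L" using s by (simp add: field_simps)
    then have "exp (-((m - s\<^sup>2)\<^sup>2/(2 * s^2))) \<le> exp (-L)" by simp
    also have "exp (-L) = s / c" unfolding L_def using s c by (simp add: ln_div exp_diff)
    finally show ?thesis .
  next
    case False
    have "exp (-((m - s\<^sup>2)\<^sup>2/(2 * s^2))) \<le> 1" by simp
    also have "1 \<le> s / c" using False c by simp
    finally show ?thesis .
  qed
  then show "exp (-((m - s\<^sup>2)\<^sup>2/(2 * s^2))) \<le> s / (4 * sqrt 2 / sqrt pi)" unfolding c_def .
qed

theorem lemma5:
  fixes \<sigma> \<mu> :: real
  assumes "\<sigma> > 0" and "\<bar>\<mu>\<bar> \<ge> r \<sigma>"
  shows "q \<sigma> \<mu> \<ge> (1/4) * \<sigma> * l_exp \<mu> \<and> (1/4) * \<sigma> * l_exp \<mu> > 0"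
proof -
  define s where "s = \<sigma>"
  define m where "m = \<bar>\<mu>\<bar>"
  have s: "s > 0" using assms s_def by simp
  have mr: "m \<ge> r s" using assms m_def s_def by simp
  have ms: "s\<^sup>2 \<le> m" and E: "exp (-((m - s\<^sup>2)\<^sup>2/(2 * s^2))) \<le> s / (4 * sqrt 2 / sqrt pi)"
    using keyE[OF s mr] by auto
  define K where "K = exp (s\<^sup>2/2 - m)"
  define p where "p = exp (-(\<mu>\<^sup>2/(2 * s^2))) / sqrt (2 * pi)"
  have le: "l_exp \<mu> = exp (-m)" unfolding l_exp_def m_def ..
  have mu2: "\<mu>\<^sup>2 = m\<^sup>2" unfolding m_def by simp
  have "-(m\<^sup>2/(2 * s^2)) = (s\<^sup>2/2 - m) + -((m - s\<^sup>2)\<^sup>2/(2 * s^2))"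
    using s by (simp add: power2_eq_square field_simps)
  then have "exp (-(m\<^sup>2/(2 * s^2))) = K * exp (-((m - s\<^sup>2)\<^sup>2/(2 * s^2)))"
    unfolding K_def by (metis exp_add)
  then have p_eq: "p = K * exp (-((m - s\<^sup>2)\<^sup>2/(2 * s^2))) / sqrt (2 * pi)"
    unfolding p_def mu2 by simp
  have sq: "sqrt (2 * pi) * (4 * sqrt 2 / sqrt pi) = 8"
    by (simp add: real_sqrt_mult field_simps)
  have K0: "K > 0" unfolding K_def by simp
  have "2 * p \<le> 2 * (K * (s / (4 * sqrt 2 / sqrt pi)) / sqrt (2 * pi))"
    unfolding p_eq using E K0 by (intro mult_left_mono divide_right_mono mult_left_mono) auto
  also have "\<dots> = s * K / 4" using sq by (simp add: field_simps)
  finally have p_le: "2 * p \<le> s * K / 4" .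
  have a0: "s - m / s \<le> 0" using ms s by (simp add: field_simps power2_eq_square)
  have Psi_half: "Psi (s - m / s) \<ge> 1/2" using Psi_mono[OF a0] Psi_0 by simp
  have gK: "g s \<mu> \<ge> K / 2"
  proof (cases "\<mu> \<ge> 0")
    case True
    then have "m = \<mu>" unfolding m_def by simp
    then have "g s \<mu> = K * Psi (s - m/s) + exp (s\<^sup>2/2 + \<mu>) * Psi (s + \<mu>/s)"
      using g_closed[OF s] unfolding K_def by simp
    moreover have "exp (s\<^sup>2/2 + \<mu>) * Psi (s + \<mu>/s) \<ge> 0" using Psi_nonneg by simp
    moreover have "K * Psi (s - m/s) \<ge> K * (1/2)" using Psi_half K0 by (intro mult_left_mono) auto
    ultimately show ?thesis by simp
  next
    case False
    then have "m = -\<mu>" unfolding m_def by simp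
    then have "g s \<mu> = exp (s\<^sup>2/2 - \<mu>) * Psi (s - \<mu>/s) + K * Psi (s - m/s)"
      using g_closed[OF s] unfolding K_def by simp
    moreover have "exp (s\<^sup>2/2 - \<mu>) * Psi (s - \<mu>/s) \<ge> 0" using Psi_nonneg by simp
    moreover have "K * Psi (s - m/s) \<ge> K * (1/2)" using Psi_half K0 by (intro mult_left_mono) auto
    ultimately show ?thesis by simp
  qed
  have q_eq: "q s \<mu> = s * g s \<mu> - 2 * p" unfolding p_def by (rule q_closed[OF s])
  have "q s \<mu> \<ge> s * (K/2) - s * K / 4"
    unfolding q_eq using gK p_le s by (smt (verit) mult_left_mono)
  moreover have "K \<ge> exp (-m)" unfolding K_def by simp
  then have "K \<ge> exp (-m)" .
  moreover have "s * exp (-m) \<le> s * K" using \<open>K \<ge> exp (-m)\<close> s by simp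
  ultimately have "q s \<mu> \<ge> (1/4) * s * exp (-m)" by linarith
  then show ?thesis unfolding le s_def using assms by simp
qed
end
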